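(* Let $\mathcal{V}$ be a variety of groups and $m\ge 0$ such that the relatively free group $F_{m+1}(\mathcal{V})$ is infinite. Then the subgroup of $F_{m+1}(\mathcal{V})$ generated by $m$ of the $m+1$ free generators (which is naturally isomorphic to $F_m(\mathcal{V})$) has infinite index in $F_{m+1}(\mathcal{V})$.
   Context: For a variety $\mathcal{V}$ and cardinal $k$, $F_k(\mathcal{V})$ is the $\mathcal{V}$-free group of rank $k$, i.e., $F_k/V(F_k)$ where $F_k$ is the absolutely free group of rank $k$ and $V(F_k)$ its verbal subgroup for $\mathcal{V}$. *)

theory Defs
  imports "HOL-Algebra.Coset" "HOL-Algebra.Generated_Groups"
begin

datatype gword = GVar nat | GOne | GMul gword gword | GInv gword

fun gvars :: "gword \<Rightarrow> nat set" where
  "gvars (GVar i) = {i}"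
| "gvars GOne = {}"
| "gvars (GMul a b) = gvars a \<union> gvars b"
| "gvars (GInv a) = gvars a"

fun gsubst :: "(nat \<Rightarrow> gword) \<Rightarrow> gword \<Rightarrow> gword" where
  "gsubst s (GVar i) = s i"
| "gsubst s GOne = GOne"
| "gsubst s (GMul a b) = GMul (gsubst s a) (gsubst s b)"
| "gsubst s (GInv a) = GInv (gsubst s a)"

text \<open>A variety is given by a set W of laws (words w, meaning the law w = 1).
  veq W u v: u and v are equal modulo the group axioms and all substitution
  instances of laws in W, i.e. u V(F) = v V(F) where V(F) is the verbal subgroup.\<close>
inductive veq :: "gword set \<Rightarrow> gword \<Rightarrow> gword \<Rightarrow> bool" for W where
  refl: "veq W u u"
| sym: "veq W u v \<Longrightarrow> veq W v u"
| trans: "veq W u v \<Longrightarrow> veq W v w \<Longrightarrow> veq W u w"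
| mul_cong: "veq W u u' \<Longrightarrow> veq W v v' \<Longrightarrow> veq W (GMul u v) (GMul u' v')"
| inv_cong: "veq W u u' \<Longrightarrow> veq W (GInv u) (GInv u')"
| assoc: "veq W (GMul (GMul u v) w) (GMul u (GMul v w))"
| left_one: "veq W (GMul GOne u) u"
| left_inv: "veq W (GMul (GInv u) u) GOne"
| law: "w \<in> W \<Longrightarrow> veq W (gsubst s w) GOne"

definition words :: "nat \<Rightarrow> gword set" where
  "words k = {w. gvars w \<subseteq> {..<k}}"

definition vclass :: "gword set \<Rightarrow> nat \<Rightarrow> gword \<Rightarrow> gword set" where
  "vclass W k w = {v \<in> words k. veq W w v}"

text \<open>The relatively free group F_k(V) of rank k of the variety defined by W;
  its free generators are vclass W k (GVar i), i < k.\<close>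
definition rel_free_group :: "gword set \<Rightarrow> nat \<Rightarrow> gword set monoid" where
  "rel_free_group W k =
    \<lparr> carrier = vclass W k ` words k,
      mult = (\<lambda>A B. vclass W k (GMul (SOME a. a \<in> A) (SOME b. b \<in> B))),
      one = vclass W k GOne \<rparr>"

end

theory Submission
  imports Defs
begin

lemma gsubst_comp: "gsubst s (gsubst t w) = gsubst (\<lambda>l. gsubst s (t l)) w"
  by (induct w) auto

lemma gsubst_cong: "(\<And>l. l \<in> gvars w \<Longrightarrow> s l = t l) \<Longrightarrow> gsubst s w = gsubst t w"
  by (induct w) auto

lemma gsubst_id: "gsubst GVar w = w"
  by (induct w) auto

lemma gvars_subst: "gvars (gsubst s w) = (\<Union>l\<in>gvars w. gvars (s l))"
  by (induct w) auto

lemma veq_subst: "veq W u v \<Longrightarrow> veq W (gsubst s u) (gsubst s v)"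
proof (induct rule: veq.induct)
  case (law w t)
  then show ?case using veq.law[of w W "\<lambda>l. gsubst s (t l)"] by (simp add: gsubst_comp)
qed (auto intro: veq.intros)

lemma words_simps[simp]:
  "GMul a b \<in> words k \<longleftrightarrow> a \<in> words k \<and> b \<in> words k"
  "GInv a \<in> words k \<longleftrightarrow> a \<in> words k"
  "GOne \<in> words k"
  "GVar j \<in> words k \<longleftrightarrow> j < k"
  by (auto simp: words_def)

lemma words_subst: "u \<in> words k \<Longrightarrow> (\<And>l. l < k \<Longrightarrow> s l \<in> words k) \<Longrightarrow> gsubst s u \<in> words k"
  by (induct u) auto

lemma cls_self: "u \<in> words k \<Longrightarrow> u \<in> vclass W k u"
  by (simp add: vclass_def veq.refl)

lemma cls_eq: "u \<in> words k \<Longrightarrow> v \<in> words k \<Longrightarrow> vclass W k u = vclass W k v \<longleftrightarrow> veq W u v"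
proof
  assume "u \<in> words k" "v \<in> words k" "vclass W k u = vclass W k v"
  then show "veq W u v" using cls_self[of v k W] by (auto simp: vclass_def)
next
  assume "veq W u v"
  then show "vclass W k u = vclass W k v"
    by (auto simp: vclass_def intro: veq.trans veq.sym)
qed

lemma some_cls: "u \<in> words k \<Longrightarrow> (SOME a. a \<in> vclass W k u) \<in> words k \<and> veq W u (SOME a. a \<in> vclass W k u)"
proof -
  assume "u \<in> words k"
  then have "(SOME a. a \<in> vclass W k u) \<in> vclass W k u" using cls_self by (metis someI)
  then show ?thesis by (simp add: vclass_def)
qed

lemma G_carrier: "carrier (rel_free_group W k) = vclass W k ` words k"
  by (simp add: rel_free_group_def)

lemma G_one: "one (rel_free_group W k) = vclass W k GOne"
  by (simp add: rel_free_group_def)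

lemma G_mult: "u \<in> words k \<Longrightarrow> v \<in> words k \<Longrightarrow>
  vclass W k u \<otimes>\<^bsub>rel_free_group W k\<^esub> vclass W k v = vclass W k (GMul u v)"
  using some_cls[of u k W] some_cls[of v k W]
  by (simp add: rel_free_group_def cls_eq veq.mul_cong veq.sym)

lemma G_group: "group (rel_free_group W k)"
proof (rule groupI)
  fix x y assume "x \<in> carrier (rel_free_group W k)" "y \<in> carrier (rel_free_group W k)"
  then show "x \<otimes>\<^bsub>rel_free_group W k\<^esub> y \<in> carrier (rel_free_group W k)"
    by (auto simp: G_carrier G_mult)
next
  show "\<one>\<^bsub>rel_free_group W k\<^esub> \<in> carrier (rel_free_group W k)"
    by (auto simp: G_carrier G_one)
next
  fix x y z assume "x \<in> carrier (rel_free_group W k)" "y \<in> carrier (rel_free_group W k)"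
     "z \<in> carrier (rel_free_group W k)"
  then show "x \<otimes>\<^bsub>rel_free_group W k\<^esub> y \<otimes>\<^bsub>rel_free_group W k\<^esub> z =
          x \<otimes>\<^bsub>rel_free_group W k\<^esub> (y \<otimes>\<^bsub>rel_free_group W k\<^esub> z)"
    by (clarsimp simp: G_carrier, simp add: G_mult cls_eq veq.assoc)
next
  fix x assume "x \<in> carrier (rel_free_group W k)"
  then show "\<one>\<^bsub>rel_free_group W k\<^esub> \<otimes>\<^bsub>rel_free_group W k\<^esub> x = x"
    by (clarsimp simp: G_carrier, simp add: G_mult G_one cls_eq veq.left_one)
next
  fix x assume "x \<in> carrier (rel_free_group W k)"
  then show "\<exists>y\<in>carrier (rel_free_group W k). y \<otimes>\<^bsub>rel_free_group W k\<^esub> x = \<one>\<^bsub>rel_free_group W k\<^esub>"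
    proof -
    from \<open>x \<in> carrier (rel_free_group W k)\<close> obtain u where u: "u \<in> words k" "x = vclass W k u"
      by (auto simp: G_carrier)
    show ?thesis
      by (rule bexI[of _ "vclass W k (GInv u)"]) (simp_all add: u G_carrier G_mult G_one cls_eq veq.left_inv)
  qed
qed

lemma G_inv: "u \<in> words k \<Longrightarrow> inv\<^bsub>rel_free_group W k\<^esub> (vclass W k u) = vclass W k (GInv u)"
  by (rule group.inv_equality[OF G_group]) (simp_all add: G_carrier G_mult G_one cls_eq veq.left_inv)


definition rho :: "nat \<Rightarrow> nat \<Rightarrow> gword" where
  "rho i l = (if l = i then GOne else GVar l)"

definition Nw :: "gword set \<Rightarrow> nat \<Rightarrow> nat \<Rightarrow> gword set" where
  "Nw W k i = {u \<in> words k. veq W (gsubst (rho i) u) GOne}"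

lemma rho_words: "u \<in> words k \<Longrightarrow> gsubst (rho i) u \<in> words k"
  by (rule words_subst) (auto simp: rho_def)

lemma G_cls_carrier: "u \<in> words k \<Longrightarrow> vclass W k u \<in> carrier (rel_free_group W k)"
  by (simp add: G_carrier)

lemma G_veq: "u \<in> words k \<Longrightarrow> v \<in> words k \<Longrightarrow> veq W u v \<Longrightarrow> vclass W k u = vclass W k v"
  by (simp add: cls_eq)

lemma H_fix:
  assumes "h \<in> generate (rel_free_group W k) {vclass W k (GVar j) | j. j < k \<and> j \<noteq> i}"
  shows "\<exists>w\<in>words k. h = vclass W k w \<and> veq W (gsubst (rho i) w) w"
  using assms
proof (induct rule: generate.induct)
  case one
  show ?case by (rule bexI[of _ GOne]) (auto simp: G_one rho_def intro: veq.refl)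
next
  case (incl h)
  then obtain j where "j < k" "j \<noteq> i" "h = vclass W k (GVar j)" by auto
  then show ?case
    by (intro bexI[of _ "GVar j"]) (auto simp: rho_def intro: veq.refl)
next
  case (inv h)
  then obtain j where "j < k" "j \<noteq> i" "h = vclass W k (GVar j)" by auto
  then show ?case
    by (intro bexI[of _ "GInv (GVar j)"]) (auto simp: rho_def G_inv intro: veq.refl)
next
  case (eng h1 h2)
  then obtain w1 w2 where "w1 \<in> words k" "h1 = vclass W k w1" "veq W (gsubst (rho i) w1) w1"
    "w2 \<in> words k" "h2 = vclass W k w2" "veq W (gsubst (rho i) w2) w2" by blast
  then show ?case
    by (intro bexI[of _ "GMul w1 w2"]) (auto simp: G_mult intro: veq.mul_cong)
qed

lemma coset_inj:
  assumes u: "u \<in> Nw W k i" and v: "v \<in> Nw W k i"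
    and eq: "H #>\<^bsub>rel_free_group W k\<^esub> vclass W k u = H #>\<^bsub>rel_free_group W k\<^esub> vclass W k v"
    and H: "H = generate (rel_free_group W k) {vclass W k (GVar j) | j. j < k \<and> j \<noteq> i}"
  shows "vclass W k u = vclass W k v"
proof -
  interpret G: group "rel_free_group W k" by (rule G_group)
  have uw: "u \<in> words k" and vw: "v \<in> words k" using u v by (auto simp: Nw_def)
  have "\<one>\<^bsub>rel_free_group W k\<^esub> \<in> H" using H by (simp add: generate.one)
  then have "vclass W k v \<in> H #>\<^bsub>rel_free_group W k\<^esub> vclass W k v"
    using G_cls_carrier[OF vw, of W] unfolding r_coset_def by (force intro: G.l_one[symmetric])
  then have "vclass W k v \<in> H #>\<^bsub>rel_free_group W k\<^esub> vclass W k u" using eq by simp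
  then obtain h where hH: "h \<in> H" and hv: "vclass W k v = h \<otimes>\<^bsub>rel_free_group W k\<^esub> vclass W k u"
    unfolding r_coset_def by blast
  obtain w where w: "w \<in> words k" "h = vclass W k w" "veq W (gsubst (rho i) w) w"
    using H_fix hH H by blast
  have "veq W v (GMul w u)" using hv w uw vw by (simp add: G_mult cls_eq)
  then have "veq W (gsubst (rho i) v) (GMul (gsubst (rho i) w) (gsubst (rho i) u))"
    using veq_subst by fastforce
  then have "vclass W k (gsubst (rho i) v) = vclass W k (gsubst (rho i) w) \<otimes>\<^bsub>rel_free_group W k\<^esub> vclass W k (gsubst (rho i) u)"
    using uw vw w by (simp add: G_mult cls_eq rho_words)
  moreover have "vclass W k (gsubst (rho i) v) = \<one>\<^bsub>rel_free_group W k\<^esub>"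
    using v vw by (simp add: Nw_def G_one cls_eq rho_words)
  moreover have "vclass W k (gsubst (rho i) u) = \<one>\<^bsub>rel_free_group W k\<^esub>"
    using u uw by (simp add: Nw_def G_one cls_eq rho_words)
  moreover have "vclass W k (gsubst (rho i) w) = vclass W k w"
    using w by (simp add: cls_eq rho_words)
  ultimately have "h = \<one>\<^bsub>rel_free_group W k\<^esub>" using w G_cls_carrier by simp
  then show ?thesis using hv G_cls_carrier[OF uw] by simp
qed


definition sw :: "nat \<Rightarrow> nat \<Rightarrow> nat \<Rightarrow> gword" where
  "sw i j l = GVar (if l = i then j else if l = j then i else l)"

lemma sw_sw: "gsubst (sw i j) (gsubst (sw i j) u) = u"
proof -
  have "gsubst (sw i j) (gsubst (sw i j) u) = gsubst GVar u"
    unfolding gsubst_comp by (rule gsubst_cong) (auto simp: sw_def)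
  then show ?thesis by (simp add: gsubst_id)
qed

lemma rho_sw: "gsubst (rho i) (gsubst (sw i j) u) = gsubst (sw i j) (gsubst (rho j) u)"
  unfolding gsubst_comp by (rule gsubst_cong) (auto simp: sw_def rho_def)

lemma sw_words: "u \<in> words k \<Longrightarrow> i < k \<Longrightarrow> j < k \<Longrightarrow> gsubst (sw i j) u \<in> words k"
  by (rule words_subst) (auto simp: sw_def)

lemma Nw_sym:
  assumes fin: "finite (vclass W k ` Nw W k i)" and ik: "i < k" and jk: "j < k"
  shows "finite (vclass W k ` Nw W k j)"
proof (rule finite_subset[OF _ finite_imageI[OF fin]])
  show "vclass W k ` Nw W k j \<subseteq>
    (\<lambda>A. vclass W k (gsubst (sw i j) (SOME a. a \<in> A))) ` vclass W k ` Nw W k i"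
  proof
    fix A assume "A \<in> vclass W k ` Nw W k j"
    then obtain u where u: "u \<in> Nw W k j" "A = vclass W k u" by auto
    have uw: "u \<in> words k" using u by (simp add: Nw_def)
    let ?s = "gsubst (sw i j) u"
    have sw': "?s \<in> words k" using uw ik jk by (rule sw_words)
    have "veq W (gsubst (sw i j) (gsubst (rho j) u)) (gsubst (sw i j) GOne)"
      using u by (intro veq_subst) (simp add: Nw_def)
    then have "?s \<in> Nw W k i" using sw' by (simp add: Nw_def rho_sw)
    moreover obtain a where a: "a = (SOME a. a \<in> vclass W k ?s)" by blast
    have "a \<in> words k" "veq W ?s a" using some_cls[OF sw', of W] a by auto
    then have "vclass W k (gsubst (sw i j) a) = A"
      using u uw ik jk veq_subst[of W ?s a "sw i j"]
      by (simp add: cls_eq sw_words sw_sw veq.sym)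
    ultimately show "A \<in> (\<lambda>A. vclass W k (gsubst (sw i j) (SOME a. a \<in> A))) ` vclass W k ` Nw W k i"
      using a by (intro image_eqI[of _ _ "vclass W k ?s"]) auto
  qed
qed


definition kap :: "nat \<Rightarrow> nat \<Rightarrow> gword" where
  "kap t l = (if l < t then GOne else GVar l)"

definition prodw :: "gword list \<Rightarrow> gword" where
  "prodw xs = foldr GMul xs GOne"

lemma prodw_words: "set xs \<subseteq> words k \<Longrightarrow> prodw xs \<in> words k"
  by (induct xs) (auto simp: prodw_def)

lemma kill_all: "u \<in> words k \<Longrightarrow> vclass W k (gsubst (\<lambda>_. GOne) u) = \<one>\<^bsub>rel_free_group W k\<^esub>"
proof (induct u)
  case (GMul a b)
  interpret G: group "rel_free_group W k" by (rule G_group)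
  show ?case using GMul by (simp add: G_mult[symmetric] words_subst)
next
  case (GInv a)
  interpret G: group "rel_free_group W k" by (rule G_group)
  show ?case using GInv by (simp add: G_inv[symmetric] words_subst)
qed (auto simp: G_one)

lemma kap_words: "u \<in> words k \<Longrightarrow> gsubst (kap t) u \<in> words k"
  by (rule words_subst) (auto simp: kap_def)

lemma all_finite:
  assumes fin: "\<And>j. j < k \<Longrightarrow> finite (vclass W k ` Nw W k j)"
  shows "finite (carrier (rel_free_group W k))"
proof -
  interpret G: group "rel_free_group W k" by (rule G_group)
  define Reps where "Reps = (\<lambda>A. SOME a. a \<in> A) ` (\<Union>j<k. vclass W k ` Nw W k j)"
  have finR: "finite Reps" unfolding Reps_def using fin by auto
  have Rw: "Reps \<subseteq> words k"
    unfolding Reps_def Nw_def using some_cls by blast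
  have claim: "\<exists>xs. set xs \<subseteq> Reps \<and> length xs \<le> t \<and>
      vclass W k u = vclass W k (GMul (gsubst (kap t) u) (prodw xs))"
    if "t \<le> k" "u \<in> words k" for t u
    using that
  proof (induct t)
    case 0
    have "gsubst (kap 0) u = gsubst GVar u" by (rule gsubst_cong) (simp add: kap_def)
    then have "gsubst (kap 0) u = u" by (simp add: gsubst_id)
    then show ?case using 0
      by (intro exI[of _ "[]"]) (simp add: prodw_def G_mult[symmetric] G_one G_cls_carrier)
  next
    case (Suc t)
    then obtain xs where xs: "set xs \<subseteq> Reps" "length xs \<le> t"
      "vclass W k u = vclass W k (GMul (gsubst (kap t) u) (prodw xs))" by auto
    define v where "v = gsubst (kap t) u"
    have vw: "v \<in> words k" using Suc by (simp add: v_def kap_words)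
    have rv: "gsubst (rho t) v = gsubst (kap (Suc t)) u"
      unfolding v_def gsubst_comp by (rule gsubst_cong) (auto simp: kap_def rho_def)
    have rr: "gsubst (rho t) (gsubst (rho t) v) = gsubst (rho t) v"
      unfolding gsubst_comp by (rule gsubst_cong) (auto simp: rho_def)
    define n where "n = GMul (GInv (gsubst (rho t) v)) v"
    have nw: "n \<in> words k" using vw by (simp add: n_def rho_words)
    have "vclass W k (gsubst (rho t) n) = \<one>\<^bsub>rel_free_group W k\<^esub>"
      using vw by (simp add: n_def rr G_mult[symmetric] G_inv[symmetric] rho_words G_cls_carrier)
    then have nN: "n \<in> Nw W k t" using nw by (simp add: Nw_def G_one cls_eq rho_words)
    define r where "r = (SOME a. a \<in> vclass W k n)"
    have "vclass W k n \<in> (\<Union>j<k. vclass W k ` Nw W k j)" using nN Suc by auto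
    then have rR: "r \<in> Reps" unfolding Reps_def r_def by (rule imageI)
    have rn: "vclass W k r = vclass W k n" using some_cls[OF nw, of W] nw
      by (simp add: r_def cls_eq veq.sym)
    have rw: "r \<in> words k" using rR Rw by auto
    have pw: "prodw xs \<in> words k" using xs Rw prodw_words by blast
    have "vclass W k (GMul (gsubst (kap (Suc t)) u) (prodw (r # xs))) =
      vclass W k (gsubst (rho t) v) \<otimes>\<^bsub>rel_free_group W k\<^esub> (vclass W k r \<otimes>\<^bsub>rel_free_group W k\<^esub> vclass W k (prodw xs))"
      using rw pw vw by (simp add: rv[symmetric] prodw_def G_mult rho_words)
    also have "\<dots> = vclass W k v \<otimes>\<^bsub>rel_free_group W k\<^esub> vclass W k (prodw xs)"
      using vw pw by (simp add: rn n_def G_mult[symmetric] G_inv[symmetric] rho_words G_cls_carrier G.m_assoc[symmetric])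
    also have "\<dots> = vclass W k u" using xs vw pw by (simp add: v_def G_mult)
    finally show ?case using rR xs by (intro exI[of _ "r # xs"]) auto
  qed
  have "carrier (rel_free_group W k) \<subseteq> (\<lambda>xs. vclass W k (prodw xs)) ` {xs. set xs \<subseteq> Reps \<and> length xs \<le> k}"
  proof
    fix x assume "x \<in> carrier (rel_free_group W k)"
    then obtain u where u: "u \<in> words k" "x = vclass W k u" by (auto simp: G_carrier)
    obtain xs where xs: "set xs \<subseteq> Reps" "length xs \<le> k"
      "vclass W k u = vclass W k (GMul (gsubst (kap k) u) (prodw xs))" using claim[OF le_refl u(1)] by auto
    have "gsubst (kap k) u = gsubst (\<lambda>_. GOne) u"
      using u by (intro gsubst_cong) (auto simp: kap_def words_def)
    moreover have pw: "prodw xs \<in> words k" using xs Rw prodw_words by blast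
    ultimately have "x = vclass W k (prodw xs)"
      using xs u by (simp add: G_mult[symmetric] kill_all words_subst G_cls_carrier)
    then show "x \<in> (\<lambda>xs. vclass W k (prodw xs)) ` {xs. set xs \<subseteq> Reps \<and> length xs \<le> k}"
      using xs by auto
  qed
  moreover have "finite {xs. set xs \<subseteq> Reps \<and> length xs \<le> k}"
    using finite_lists_length_le[OF finR] by simp
  ultimately show ?thesis by (meson finite_imageI finite_subset)
qed


theorem mainTheorem8:
  fixes W :: "gword set" and m i :: nat
  assumes "infinite (carrier (rel_free_group W (Suc m)))"
    and "i \<le> m"
  shows "infinite (rcosets\<^bsub>rel_free_group W (Suc m)\<^esub>
           (generate (rel_free_group W (Suc m))
              {vclass W (Suc m) (GVar j) | j. j \<le> m \<and> j \<noteq> i}))"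
proof
  define k where "k = Suc m"
  define H where "H = generate (rel_free_group W k) {vclass W k (GVar j) | j. j < k \<and> j \<noteq> i}"
  have HH: "{vclass W (Suc m) (GVar j) | j. j \<le> m \<and> j \<noteq> i} = {vclass W k (GVar j) | j. j < k \<and> j \<noteq> i}"
    by (auto simp: k_def less_Suc_eq_le)
  assume "finite (rcosets\<^bsub>rel_free_group W (Suc m)\<^esub>
           (generate (rel_free_group W (Suc m))
              {vclass W (Suc m) (GVar j) | j. j \<le> m \<and> j \<noteq> i}))"
  then have fin: "finite (rcosets\<^bsub>rel_free_group W k\<^esub> H)" by (simp add: HH H_def k_def)
  have sub: "(\<lambda>A. H #>\<^bsub>rel_free_group W k\<^esub> A) ` (vclass W k ` Nw W k i) \<subseteq> rcosets\<^bsub>rel_free_group W k\<^esub> H"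
    unfolding RCOSETS_def Nw_def using G_cls_carrier by blast
  have "inj_on (\<lambda>A. H #>\<^bsub>rel_free_group W k\<^esub> A) (vclass W k ` Nw W k i)"
    unfolding inj_on_def using coset_inj[OF _ _ _ H_def] by blast
  then have "finite (vclass W k ` Nw W k i)"
    using finite_subset[OF sub fin] finite_imageD by blast
  then have "\<And>j. j < k \<Longrightarrow> finite (vclass W k ` Nw W k j)"
    using Nw_sym assms(2) k_def by auto
  then have "finite (carrier (rel_free_group W k))" by (rule all_finite)
  then show False using assms(1) k_def by simp
qed

end
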